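(* Let $m\ge 2$ be an integer, and let $A\ge 1$, $B\ge 0$, $C\ge 1$ be integers such that $p(An+B)\equiv 0 \pmod{C}$ for all integers $n\ge 0$. If $B<A$ and $A\mid m$, then for every positive integer $k$ and every integer $n\ge 0$, $$p_{\rho,m}(An+B,k)\equiv 0 \pmod{C}.$$
   Context: $p(n)$ denotes the number of partitions of $n$. Part-frequency matrices: fix an integer modulus $m\ge 2$. Every positive integer $N$ can be written uniquely as $N=jm^k$ with $k\ge 0$ and $m\nmid j$. For a partition $\lambda$, write the number of times the part $N$ occurs in base $m$ as $\sum_{\ell\ge 0} a_{N,\ell}m^\ell$ with digits $a_{N,\ell}\in\{0,\dots,m-1\}$. For each $j\ge 1$ with $m\nmid j$, let $M_j$ be the infinite matrix, with rows and columns indexed from $0$, whose entry in row $k$, column $\ell$ is $a_{jm^k,\ell}$. The partition is recovered from the sequence $(M_j)$; an entry $a$ at position $(k,\ell)$ of $M_j$ contributes $a\cdot j\cdot m^{k+\ell}$ to the weight of the partition, so entries on the same antidiagonal $k+\ell=\text{const}$ contribute in the same unit. The map $\rho$ (depending on $m$): apply to every matrix $M_j$ the following rotation of each antidiagonal. The entry at position $(k,\ell)$ with $\ell\ge 1$ moves to position $(k+1,\ell-1)$, and the entry at position $(k,0)$ moves to position $(0,k)$. The resulting sequence of matrices defines a new partition of the same integer, so $\rho$ is a permutation of the finite set of partitions of $n$. The orbit size of a partition is the size of its orbit under $\rho$. $p_{\rho,m}(n,k)$ denotes the number of partitions of $n$ lying in orbits of size $k$ under $\rho$ with modulus $m$.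 *)

theory Defs
  imports Main
begin

text \<open>Partitions of n, represented by multiplicity functions: f i = number of times part i occurs.\<close>
definition partitions :: "nat \<Rightarrow> (nat \<Rightarrow> nat) set" where
  "partitions n = {f. (\<forall>i. f i \<noteq> 0 \<longrightarrow> 0 < i \<and> i \<le> n) \<and> (\<Sum>i=1..n. i * f i) = n}"

definition p :: "nat \<Rightarrow> nat" where
  "p n = card (partitions n)"

text \<open>The m-adic exponent k of N = j m^k with m not dividing j (N > 0, m >= 2).\<close>
definition mexp :: "nat \<Rightarrow> nat \<Rightarrow> nat" where
  "mexp m N = (GREATEST k. m ^ k dvd N)"

definition mpart :: "nat \<Rightarrow> nat \<Rightarrow> nat" where
  "mpart m N = N div m ^ mexp m N"

definition digit :: "nat \<Rightarrow> nat \<Rightarrow> nat \<Rightarrow> nat" where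
  "digit m x l = x div m ^ l mod m"

definition pfmat :: "nat \<Rightarrow> (nat \<Rightarrow> nat) \<Rightarrow> nat \<Rightarrow> nat \<Rightarrow> nat \<Rightarrow> nat" where
  "pfmat m f j k l = digit m (f (j * m ^ k)) l"

text \<open>Antidiagonal rotation: (k,l) with l>=1 moves to (k+1,l-1), (k,0) moves to (0,k).
  So the new entry at (k',l') is the old entry at (l',0) if k'=0, and at (k'-1,l'+1) otherwise.\<close>
definition rotmat :: "(nat \<Rightarrow> nat \<Rightarrow> nat) \<Rightarrow> nat \<Rightarrow> nat \<Rightarrow> nat" where
  "rotmat M k l = (if k = 0 then M l 0 else M (k - 1) (l + 1))"

text \<open>Recover multiplicities from the sequence of matrices (indexed by j with m not dividing j).\<close>
definition frommats :: "nat \<Rightarrow> (nat \<Rightarrow> nat \<Rightarrow> nat \<Rightarrow> nat) \<Rightarrow> nat \<Rightarrow> nat" where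
  "frommats m Ms N = (if N = 0 then 0 else
     (let j = mpart m N; k = mexp m N in \<Sum>l\<in>{l. Ms j k l \<noteq> 0}. Ms j k l * m ^ l))"

definition rho :: "nat \<Rightarrow> (nat \<Rightarrow> nat) \<Rightarrow> (nat \<Rightarrow> nat)" where
  "rho m f = frommats m (\<lambda>j. rotmat (pfmat m f j))"

definition orbit_size :: "nat \<Rightarrow> (nat \<Rightarrow> nat) \<Rightarrow> nat" where
  "orbit_size m f = card {(rho m ^^ i) f | i. True}"

definition p_rho :: "nat \<Rightarrow> nat \<Rightarrow> nat \<Rightarrow> nat" where
  "p_rho m n k = card {f \<in> partitions n. orbit_size m f = k}"

end

theory Submission imports Defs begin

lemma digits_lt: assumes "m \<ge> 2"
  shows "(\<Sum>l<K. (y div m ^ l mod m) * m ^ l) = (y::nat) mod m ^ K"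
proof (induction K)
  case 0 then show ?case by simp
next
  case (Suc K)
  have "y mod (m ^ K * m) = m ^ K * (y div m ^ K mod m) + y mod m ^ K"
    by (rule mod_mult2_eq)
  then show ?case using Suc by (simp add: mult.commute)
qed

lemma sum_nz_bound:
  fixes g :: "nat \<Rightarrow> nat"
  assumes "\<And>l. l \<ge> K \<Longrightarrow> g l = 0"
  shows "(\<Sum>l\<in>{l. g l \<noteq> 0}. g l * c l) = (\<Sum>l<K. g l * c l)"
proof -
  have "{l. g l \<noteq> 0} \<subseteq> {..<K}" using assms by (metis (mono_tags, lifting) lessThan_iff mem_Collect_eq not_less subsetI)
  then show ?thesis by (intro sum.mono_neutral_left) auto
qed

lemma pow_gt: assumes "m \<ge> 2" shows "(l::nat) < (m::nat) ^ l"
proof -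
  have "l < 2 ^ l" by simp
  also have "\<dots> \<le> m ^ l" using assms by (simp add: power_mono)
  finally show ?thesis .
qed

lemma digits_sum: assumes "m \<ge> 2"
  shows "(\<Sum>l\<in>{l. y div m ^ l mod m \<noteq> 0}. (y div m ^ l mod m) * m ^ l) = (y::nat)"
proof -
  have "\<And>l. l \<ge> y \<Longrightarrow> y div m ^ l mod m = 0"
  proof -
    fix l assume "l \<ge> y"
    have "y < m ^ y" using pow_gt assms by blast
    also have "\<dots> \<le> m ^ l" using \<open>l \<ge> y\<close> assms by (simp add: power_increasing)
    finally show "y div m ^ l mod m = 0" by simp
  qed
  then have "(\<Sum>l\<in>{l. y div m ^ l mod m \<noteq> 0}. (y div m ^ l mod m) * m ^ l) = (\<Sum>l<y. (y div m ^ l mod m) * m ^ l)"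
    by (rule sum_nz_bound)
  also have "\<dots> = y mod m ^ y" using digits_lt assms by blast
  also have "\<dots> = y" using pow_gt[OF assms, of y] by simp
  finally show ?thesis .
qed

lemma mexp_props:
  assumes "m \<ge> 2" "N > 0"
  shows "m ^ mexp m N dvd N" "\<not> m ^ Suc (mexp m N) dvd N"
proof -
  have b: "\<forall>y. m ^ y dvd N \<longrightarrow> y \<le> N"
  proof (intro allI impI)
    fix y assume "m ^ y dvd N"
    then have "m ^ y \<le> N" using assms by (simp add: dvd_imp_le)
    then show "y \<le> N" using pow_gt[OF assms(1), of y] by simp
  qed
  have z: "m ^ 0 dvd N" by simp
  show "m ^ mexp m N dvd N" unfolding mexp_def using GreatestI_nat[where P="\<lambda>k. m^k dvd N", OF z] b by blast
  show "\<not> m ^ Suc (mexp m N) dvd N"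
  proof
    assume "m ^ Suc (mexp m N) dvd N"
    then have "Suc (mexp m N) \<le> mexp m N" unfolding mexp_def using Greatest_le_nat[where P="\<lambda>k. m^k dvd N"] b by blast
    then show False by simp
  qed
qed

lemma mpart_props:
  assumes "m \<ge> 2" "N > 0"
  shows "N = mpart m N * m ^ mexp m N" "\<not> m dvd mpart m N"
proof -
  show e: "N = mpart m N * m ^ mexp m N" unfolding mpart_def using mexp_props(1)[OF assms] by simp
  show "\<not> m dvd mpart m N"
  proof
    assume "m dvd mpart m N"
    then obtain c where "mpart m N = m * c" by auto
    then have "N = m ^ Suc (mexp m N) * c" using e by (simp add: ac_simps)
    then show False using mexp_props(2)[OF assms] by (metis dvd_triv_left)
  qed
qed

lemma rho_eq:
  assumes "m \<ge> 2"
  shows "rho m f N = (if N = 0 then 0 else if m dvd N then f (N div m) div m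
     else (\<Sum>l\<in>{l. f (N * m ^ l) mod m \<noteq> 0}. (f (N * m ^ l) mod m) * m ^ l))"
proof (cases "N = 0")
  case True then show ?thesis by (simp add: rho_def frommats_def)
next
  case False
  then have N: "N > 0" by simp
  define j where "j = mpart m N"
  define k where "k = mexp m N"
  have e: "N = j * m ^ k" and nd: "\<not> m dvd j" using mpart_props[OF assms N] j_def k_def by auto
  have r: "rho m f N = (\<Sum>l\<in>{l. rotmat (pfmat m f j) k l \<noteq> 0}. rotmat (pfmat m f j) k l * m ^ l)"
    using False by (simp add: rho_def frommats_def j_def k_def Let_def)
  show ?thesis
  proof (cases k)
    case 0
    then have "N = j" using e by simp
    then show ?thesis using r 0 nd False by (simp add: rotmat_def pfmat_def digit_def)
  next
    case (Suc k')
    have md: "m dvd N" using e Suc by simp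
    have nd2: "N div m = j * m ^ k'" using e Suc assms by simp
    define x where "x = f (j * m ^ k')"
    have "rho m f N = (\<Sum>l\<in>{l. x div m div m ^ l mod m \<noteq> 0}. (x div m div m ^ l mod m) * m ^ l)"
      using r Suc by (simp add: rotmat_def pfmat_def digit_def x_def div_mult2_eq)
    also have "\<dots> = x div m" using digits_sum assms by blast
    finally show ?thesis using md nd2 False x_def by simp
  qed
qed


definition mu :: "nat \<Rightarrow> (nat \<Rightarrow> nat) \<Rightarrow> nat \<Rightarrow> nat" where
  "mu m f = (\<lambda>j. if m dvd j then 0 else f j mod m)"
definition gp :: "nat \<Rightarrow> (nat \<Rightarrow> nat) \<Rightarrow> nat \<Rightarrow> nat" where
  "gp m f = (\<lambda>j. f j - mu m f j)"
definition add2 :: "(nat \<Rightarrow> nat) \<Rightarrow> (nat \<Rightarrow> nat) \<Rightarrow> nat \<Rightarrow> nat" where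
  "add2 g h = (\<lambda>i. g i + h i)"
definition fs :: "(nat \<Rightarrow> nat) \<Rightarrow> bool" where
  "fs h = (\<exists>b. \<forall>i>b. h i = 0)"
definition inG :: "nat \<Rightarrow> (nat \<Rightarrow> nat) \<Rightarrow> bool" where
  "inG m h = (\<forall>j. \<not> m dvd j \<longrightarrow> m dvd h j)"
definition inMU :: "nat \<Rightarrow> (nat \<Rightarrow> nat) \<Rightarrow> bool" where
  "inMU m h = (\<forall>j. h j < m \<and> (m dvd j \<longrightarrow> h j = 0))"

lemma sum_nz_bound2:
  assumes "m \<ge> 2" "N > 0" "\<And>i. i > b \<Longrightarrow> f i = 0"
  shows "(\<Sum>l\<in>{l. f (N * m ^ l) mod m \<noteq> 0}. (f (N * m ^ l) mod m) * m ^ l)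
       = (\<Sum>l<Suc b. (f (N * m ^ l) mod m) * m ^ l)"
proof (rule sum_nz_bound)
  fix l assume "Suc b \<le> l"
  have "l < m ^ l" using pow_gt assms(1) by blast
  also have "\<dots> \<le> N * m ^ l" using assms(2) by simp
  finally have "N * m ^ l > b" using \<open>Suc b \<le> l\<close> by simp
  then show "f (N * m ^ l) mod m = 0" using assms(3) by simp
qed

lemma rho_add:
  assumes m: "m \<ge> 2" and "fs \<mu>" "fs h" "inMU m \<mu>" "inG m h"
  shows "rho m (add2 \<mu> h) = add2 \<mu> (rho m h)"
proof
  fix N
  obtain b1 where b1: "\<forall>i>b1. \<mu> i = 0" using assms(2) fs_def by auto
  obtain b2 where b2: "\<forall>i>b2. h i = 0" using assms(3) fs_def by auto
  define b where "b = b1 + b2"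
  have bh: "\<And>i. i > b \<Longrightarrow> h i = 0" using b2 b_def by auto
  have ba: "\<And>i. i > b \<Longrightarrow> add2 \<mu> h i = 0" using b1 b2 b_def by (auto simp: add2_def)
  have mu0: "\<And>j. m dvd j \<Longrightarrow> \<mu> j = 0" and mul: "\<And>j. \<mu> j < m" using assms(4) inMU_def by auto
  have hd: "\<And>j. \<not> m dvd j \<Longrightarrow> m dvd h j" using assms(5) inG_def by auto
  show "rho m (add2 \<mu> h) N = add2 \<mu> (rho m h) N"
  proof (cases "N = 0")
    case True then show ?thesis using rho_eq[OF m] mu0 by (simp add: add2_def)
  next
    case False
    show ?thesis
    proof (cases "m dvd N")
      case True
      have "(\<mu> (N div m) + h (N div m)) div m = h (N div m) div m"
      proof (cases "m dvd N div m")
        case True then show ?thesis using mu0 by simp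
      next
        case False
        then obtain c where c: "h (N div m) = m * c" using hd by blast
        then show ?thesis using mul[of "N div m"] m by simp
      qed
      then show ?thesis using True False rho_eq[OF m] mu0[OF True] by (simp add: add2_def)
    next
      case nd: False
      have L: "rho m (add2 \<mu> h) N = (\<Sum>l<Suc b. (add2 \<mu> h (N * m ^ l) mod m) * m ^ l)"
        using rho_eq[OF m] nd False sum_nz_bound2[OF m _ ba] by simp
      have R: "rho m h N = (\<Sum>l<Suc b. (h (N * m ^ l) mod m) * m ^ l)"
        using rho_eq[OF m] nd False sum_nz_bound2[OF m _ bh] by simp
      have t0: "add2 \<mu> h N mod m = \<mu> N" "h N mod m = 0"
        using hd[OF nd] mul[of N] by (auto simp: add2_def)
      have ts: "\<And>l. add2 \<mu> h (N * m ^ Suc l) mod m = h (N * m ^ Suc l) mod m"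
        using mu0 by (simp add: add2_def)
      show ?thesis unfolding L R add2_def[of \<mu> "rho m h"]
        using t0 ts by (simp only: sum.lessThan_Suc_shift) simp
    qed
  qed
qed

lemma rho_G:
  assumes m: "m \<ge> 2" and "fs h" "inG m h"
  shows "inG m (rho m h)"
  unfolding inG_def
proof (intro allI impI)
  fix N assume nd: "\<not> m dvd N"
  then have N: "N \<noteq> 0" by (rule contrapos_nn) simp
  obtain b where b: "\<And>i. i > b \<Longrightarrow> h i = 0" using assms(2) fs_def by auto
  have hd: "\<And>j. \<not> m dvd j \<Longrightarrow> m dvd h j" using assms(3) inG_def by auto
  have R: "rho m h N = (\<Sum>l<Suc b. (h (N * m ^ l) mod m) * m ^ l)"
    using rho_eq[OF m] nd N sum_nz_bound2[OF m _ b] by simp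
  also have "\<dots> = (\<Sum>l<b. (h (N * m ^ Suc l) mod m) * m ^ Suc l)"
    using hd[OF nd] by (simp only: sum.lessThan_Suc_shift) simp
  finally show "m dvd rho m h N" by (simp add: dvd_sum)
qed

lemma rho_fs:
  assumes m: "m \<ge> 2" and "fs h"
  shows "fs (rho m h)"
proof -
  obtain b where b: "\<And>i. i > b \<Longrightarrow> h i = 0" using assms(2) fs_def by auto
  have "\<forall>N > m * Suc b. rho m h N = 0"
  proof (intro allI impI)
    fix N assume Nb: "N > m * Suc b"
    show "rho m h N = 0"
    proof (cases "m dvd N")
      case True
      then obtain c where c: "N = m * c" by blast
      then have "m * Suc b < m * c" using Nb by simp
      then have "c > b" by (simp only: mult_less_cancel1) simp
      then show ?thesis using rho_eq[OF m] c b m by simp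
    next
      case False
      have "m * Suc b \<ge> 1 * Suc b" using m by (intro mult_le_mono1) simp
      then have "N > b" using Nb by (simp only: mult_1)
      have "\<And>l. h (N * m ^ l) = 0"
      proof -
        fix l have "N * m ^ l \<ge> N" using m by simp
        then show "h (N * m ^ l) = 0" by (rule b[OF order_less_le_trans[OF \<open>N > b\<close>]])
      qed
      then show ?thesis using rho_eq[OF m] False by simp
    qed
  qed
  then show ?thesis unfolding fs_def by blast
qed

lemma rho_iter:
  assumes m: "m \<ge> 2" and "fs \<mu>" "fs h" "inMU m \<mu>" "inG m h"
  shows "(rho m ^^ i) (add2 \<mu> h) = add2 \<mu> ((rho m ^^ i) h) \<and> fs ((rho m ^^ i) h) \<and> inG m ((rho m ^^ i) h)"
proof (induction i)
  case 0 then show ?case using assms by simp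
next
  case (Suc i)
  then show ?case using rho_add[OF m assms(2) _ assms(4)] rho_G[OF m] rho_fs[OF m] by simp
qed


lemma finite_partitions: "finite (partitions n)"
proof -
  have inj: "inj_on (\<lambda>f. map f [0..<Suc n]) (partitions n)"
  proof (rule inj_onI)
    fix f g assume f: "f \<in> partitions n" and g: "g \<in> partitions n" and e: "map f [0..<Suc n] = map g [0..<Suc n]"
    show "f = g"
    proof
      fix i show "f i = g i"
      proof (cases "i \<le> n")
        case True then show ?thesis using e by (metis map_eq_conv atLeastLessThan_iff le_imp_less_Suc set_upt zero_le)
      next
        case False
        have "f i = 0" using f False unfolding partitions_def by auto
        moreover have "g i = 0" using g False unfolding partitions_def by auto
        ultimately show ?thesis by simp
      qed
    qed
  qed
  have sub: "(\<lambda>f. map f [0..<Suc n]) ` partitions n \<subseteq> {xs. set xs \<subseteq> {0..n} \<and> length xs = Suc n}"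
  proof
    fix xs assume "xs \<in> (\<lambda>f. map f [0..<Suc n]) ` partitions n"
    then obtain f where f: "f \<in> partitions n" and xs: "xs = map f [0..<Suc n]" by auto
    have "\<And>i. f i \<le> n"
    proof -
      fix i show "f i \<le> n"
      proof (cases "f i = 0")
        case False
        then have i: "0 < i" "i \<le> n" using f unfolding partitions_def by auto
        have "f i \<le> i * f i" using i by simp
        also have "\<dots> \<le> (\<Sum>i=1..n. i * f i)" using i by (intro member_le_sum) auto
        also have "\<dots> = n" using f unfolding partitions_def by auto
        finally show ?thesis .
      qed simp
    qed
    then show "xs \<in> {xs. set xs \<subseteq> {0..n} \<and> length xs = Suc n}" using xs by auto
  qed
  have fin: "finite {xs. set xs \<subseteq> {0..n} \<and> length xs = Suc n}"
    by (rule finite_lists_length_eq) simp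
  have "finite ((\<lambda>f. map f [0..<Suc n]) ` partitions n)" by (rule finite_subset[OF sub fin])
  then show ?thesis by (rule finite_imageD[OF _ inj])
qed

lemma sum_ext:
  fixes f :: "nat \<Rightarrow> nat"
  assumes "\<forall>i>a. f i = 0" "a \<le> b"
  shows "(\<Sum>i=1..b. i * f i) = (\<Sum>i=1..a. i * f i)"
  using assms by (intro sum.mono_neutral_right) auto

lemma part_bound: assumes "f \<in> partitions n" shows "\<forall>i>n. f i = 0"
proof (intro allI impI)
  fix i assume i: "i > n"
  show "f i = 0"
  proof (rule ccontr)
    assume "f i \<noteq> 0"
    then have "i \<le> n" using assms unfolding partitions_def by blast
    then show False using i by simp
  qed
qed

lemma sub_part:
  assumes f: "f \<in> partitions n" and le: "\<And>i. g i \<le> f i"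
  shows "g \<in> partitions (\<Sum>i=1..n. i * g i)" "(\<Sum>i=1..n. i * g i) \<le> n"
proof -
  define W where "W = (\<Sum>i=1..n. i * g i)"
  have sup: "\<And>i. g i \<noteq> 0 \<Longrightarrow> 0 < i \<and> i \<le> n"
  proof -
    fix i assume "g i \<noteq> 0"
    then have "f i \<noteq> 0" using le[of i] by linarith
    then show "0 < i \<and> i \<le> n" using f unfolding partitions_def by blast
  qed
  have iW: "\<And>i. g i \<noteq> 0 \<Longrightarrow> i \<le> W"
  proof -
    fix i assume gi: "g i \<noteq> 0"
    then have i: "0 < i" "i \<le> n" using sup by auto
    have "i \<le> i * g i" using gi by simp
    also have "\<dots> \<le> W" unfolding W_def using i by (intro member_le_sum) auto
    finally show "i \<le> W" .
  qed
  show Wn: "W \<le> n"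
  proof -
    have "W \<le> (\<Sum>i=1..n. i * f i)" unfolding W_def by (intro sum_mono mult_le_mono2 le)
    also have "\<dots> = n" using f unfolding partitions_def by auto
    finally show ?thesis .
  qed
  have z: "\<forall>i>W. g i = 0"
  proof (intro allI impI)
    fix i assume i: "i > W"
    show "g i = 0"
    proof (rule ccontr)
      assume "g i \<noteq> 0" then have "i \<le> W" by (rule iW)
      then show False using i by simp
    qed
  qed
  have "(\<Sum>i=1..W. i * g i) = W" using sum_ext[OF z Wn] W_def by simp
  then show "g \<in> partitions W" using sup iW unfolding partitions_def by auto
qed

lemma mu_le: "mu m f i \<le> f i" by (simp add: mu_def)

lemma mu_MU: "m \<ge> 2 \<Longrightarrow> inMU m (mu m f)" by (simp add: mu_def inMU_def)

lemma gp_G: "m \<ge> 2 \<Longrightarrow> inG m (gp m f)"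
  unfolding inG_def gp_def mu_def
  by (simp add: minus_mod_eq_mult_div[symmetric])

lemma add_mu_gp: "add2 (mu m f) (gp m f) = f"
  by (rule ext) (simp add: add2_def gp_def mu_def)

lemma fs_le: "fs f \<Longrightarrow> (\<And>i. g i \<le> f i) \<Longrightarrow> fs g"
  unfolding fs_def by (metis le_zero_eq)

lemma gp_le: "gp m f i \<le> f i" by (simp add: gp_def)

lemma orbit_eq:
  assumes m: "m \<ge> 2" and f: "f \<in> partitions n"
  shows "orbit_size m f = orbit_size m (gp m f)"
proof -
  have ff: "fs f" using part_bound[OF f] fs_def by auto
  have fm: "fs (mu m f)" by (rule fs_le[OF ff, of "mu m f", OF mu_le])
  have fg: "fs (gp m f)" by (rule fs_le[OF ff, of "gp m f", OF gp_le])
  have it: "\<And>i. (rho m ^^ i) f = add2 (mu m f) ((rho m ^^ i) (gp m f))"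
    using rho_iter[OF m fm fg mu_MU[OF m] gp_G[OF m]] add_mu_gp[of m f] by metis
  have "{(rho m ^^ i) f | i. True} = add2 (mu m f) ` {(rho m ^^ i) (gp m f) | i. True}"
    using it by auto
  moreover have "inj (add2 (mu m f))"
    by (rule injI) (metis add2_def add_left_cancel ext)
  ultimately show ?thesis unfolding orbit_size_def
    by (simp add: card_image inj_on_subset)
qed


definition Gs :: "nat \<Rightarrow> nat \<Rightarrow> (nat \<Rightarrow> nat) set" where
  "Gs m r = {g \<in> partitions r. inG m g}"
definition Ms :: "nat \<Rightarrow> nat \<Rightarrow> (nat \<Rightarrow> nat) set" where
  "Ms m s = {u \<in> partitions s. inMU m u}"

lemma mu_add: "inMU m u \<Longrightarrow> inG m g \<Longrightarrow> mu m (add2 u g) = u"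
proof
  fix j assume u: "inMU m u" and g: "inG m g"
  show "mu m (add2 u g) j = u j"
  proof (cases "m dvd j")
    case True then show ?thesis using u by (simp add: mu_def inMU_def)
  next
    case False
    then obtain c where c: "g j = m * c" using g unfolding inG_def by blast
    have "u j < m" using u unfolding inMU_def by blast
    then show ?thesis using False c by (simp add: mu_def add2_def)
  qed
qed

lemma gp_add: "inMU m u \<Longrightarrow> inG m g \<Longrightarrow> gp m (add2 u g) = g"
  unfolding gp_def by (simp only: mu_add) (simp add: add2_def)

lemma count:
  assumes m: "m \<ge> 2"
  shows "card {f \<in> partitions n. P (gp m f)} =
         (\<Sum>r\<in>{0..n}. card {g \<in> Gs m r. P g} * card (Ms m (n - r)))"
proof -
  define S where "S = {f \<in> partitions n. P (gp m f)}"
  define T where "T = Sigma {0..n} (\<lambda>r. {g \<in> Gs m r. P g} \<times> Ms m (n - r))"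
  define W where "W = (\<lambda>g::nat\<Rightarrow>nat. \<Sum>i=1..n. i * g i)"
  define F where "F = (\<lambda>f. (W (gp m f), gp m f, mu m f))"
  define Fi where "Fi = (\<lambda>(r::nat, g, u). add2 u g)"
  have "bij_betw F S T"
  proof (rule bij_betw_byWitness[where f'=Fi])
    show "\<forall>a\<in>S. Fi (F a) = a" unfolding Fi_def F_def using add_mu_gp by simp
    show "\<forall>a'\<in>T. F (Fi a') = a'"
    proof
      fix a' assume "a' \<in> T"
      then obtain r g u where a': "a' = (r, g, u)" and r: "r \<le> n" and g: "g \<in> partitions r" "inG m g"
        and u: "inMU m u" unfolding T_def Gs_def Ms_def by auto
      have "W g = r" unfolding W_def using sum_ext[OF part_bound[OF g(1)] r] g(1)
        unfolding partitions_def by simp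
      then show "F (Fi a') = a'" unfolding a' F_def Fi_def using mu_add[OF u g(2)] gp_add[OF u g(2)] by simp
    qed
    show "F ` S \<subseteq> T"
    proof
      fix y assume "y \<in> F ` S"
      then obtain f where f: "f \<in> partitions n" "P (gp m f)" and y: "y = F f" unfolding S_def by auto
      have g1: "gp m f \<in> partitions (W (gp m f))" "W (gp m f) \<le> n"
        using sub_part[OF f(1), of "gp m f"] gp_le W_def by auto
      have u1: "mu m f \<in> partitions (W (mu m f))"
        using sub_part[OF f(1), of "mu m f"] mu_le W_def by auto
      have "W f = W (mu m f) + W (gp m f)" unfolding W_def
        by (subst add_mu_gp[of m f, symmetric]) (simp add: add2_def sum.distrib algebra_simps)
      moreover have "W f = n" using f(1) unfolding partitions_def W_def by simp
      ultimately have "W (mu m f) = n - W (gp m f)" by simp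
      then show "y \<in> T" unfolding y F_def T_def Gs_def Ms_def using g1 u1 f(2) gp_G[OF m] mu_MU[OF m]
        by auto
    qed
    show "Fi ` T \<subseteq> S"
    proof
      fix x assume "x \<in> Fi ` T"
      then obtain r g u where x: "x = add2 u g" and r: "r \<le> n" and g: "g \<in> partitions r" "inG m g" "P g"
        and u: "u \<in> partitions (n - r)" "inMU m u" unfolding T_def Gs_def Ms_def Fi_def by auto
      have s1: "(\<Sum>i=1..n. i * g i) = r" using sum_ext[OF part_bound[OF g(1)] r] g(1)
        unfolding partitions_def by simp
      have s2: "(\<Sum>i=1..n. i * u i) = n - r" using sum_ext[OF part_bound[OF u(1)] diff_le_self[of n r]] u(1)
        unfolding partitions_def by simp
      have "(\<Sum>i=1..n. i * x i) = (\<Sum>i=1..n. i * u i) + (\<Sum>i=1..n. i * g i)"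
        unfolding x add2_def by (simp only: add_mult_distrib2 sum.distrib)
      then have "(\<Sum>i=1..n. i * x i) = n" using s1 s2 r by simp
      moreover have "\<forall>i. x i \<noteq> 0 \<longrightarrow> 0 < i \<and> i \<le> n"
      proof (intro allI impI)
        fix i assume "x i \<noteq> 0"
        then have "u i \<noteq> 0 \<or> g i \<noteq> 0" unfolding x add2_def by simp
        then show "0 < i \<and> i \<le> n"
        proof
          assume "u i \<noteq> 0" then have "0 < i \<and> i \<le> n - r" using u(1) unfolding partitions_def by blast
          then show ?thesis by (meson diff_le_self order_trans)
        next
          assume "g i \<noteq> 0" then have "0 < i \<and> i \<le> r" using g(1) unfolding partitions_def by blast
          then show ?thesis using r by simp
        qed
      qed
      ultimately have "x \<in> partitions n" unfolding partitions_def by simp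
      then show "x \<in> S" unfolding S_def x using gp_add[OF u(2) g(2)] g(3) by simp
    qed
  qed
  then have "card S = card T" by (rule bij_betw_same_card)
  have fin: "\<And>r. finite ({g \<in> Gs m r. P g} \<times> Ms m (n - r))"
  proof -
    fix r
    have "finite {g \<in> Gs m r. P g}" by (rule finite_subset[OF _ finite_partitions[of r]]) (auto simp: Gs_def)
    moreover have "finite (Ms m (n - r))" by (rule finite_subset[OF _ finite_partitions[of "n - r"]]) (auto simp: Ms_def)
    ultimately show "finite ({g \<in> Gs m r. P g} \<times> Ms m (n - r))" by (rule finite_cartesian_product)
  qed
  have "card T = (\<Sum>r\<in>{0..n}. card ({g \<in> Gs m r. P g} \<times> Ms m (n - r)))"
    unfolding T_def by (rule card_SigmaI) (rule finite_atLeastAtMost, intro ballI fin)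
  also have "\<dots> = (\<Sum>r\<in>{0..n}. card {g \<in> Gs m r. P g} * card (Ms m (n - r)))"
    by (rule sum.cong) (rule refl, rule card_cartesian_product)
  finally show ?thesis using \<open>card S = card T\<close> unfolding S_def by simp
qed


lemma arith_aux:
  fixes A B n r :: nat
  assumes "r \<le> A * n + B" "A dvd r" "B < A"
  shows "\<exists>t. t \<le> n \<and> r = A * t \<and> A * n + B - r = A * (n - t) + B"
proof -
  obtain t where t: "r = A * t" using assms(2) by blast
  have "t \<le> n"
  proof (rule ccontr)
    assume "\<not> t \<le> n"
    then have "Suc n \<le> t" by simp
    then have "A * Suc n \<le> A * t" by (rule mult_le_mono2)
    then show False using assms(1,3) t by simp
  qed
  moreover have "A * n = A * (n - t) + A * t" using \<open>t \<le> n\<close>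
    by (simp add: diff_mult_distrib2)
  ultimately show ?thesis using t by auto
qed

lemma Gs_empty:
  assumes "\<not> m dvd r" shows "Gs m r = {}"
proof (rule ccontr)
  assume "Gs m r \<noteq> {}"
  then obtain g where g: "g \<in> partitions r" "inG m g" unfolding Gs_def by auto
  have "\<And>i. m dvd i * g i"
  proof -
    fix i show "m dvd i * g i"
    proof (cases "m dvd i")
      case True then show ?thesis by simp
    next
      case False then have "m dvd g i" using g(2) unfolding inG_def by blast
      then show ?thesis by simp
    qed
  qed
  then have "m dvd (\<Sum>i=1..r. i * g i)" by (simp add: dvd_sum)
  then have "m dvd r" using g(1) unfolding partitions_def by simp
  then show False using assms by simp
qed

lemma partitions0: "partitions 0 = {\<lambda>_. 0}"
  unfolding partitions_def by (auto intro!: ext)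

lemma card_Gs0: "card (Gs m 0) = 1"
proof -
  have "Gs m 0 = {\<lambda>_. 0}" unfolding Gs_def partitions0 inG_def by auto
  then show ?thesis by simp
qed

lemma p_eq: assumes "m \<ge> 2"
  shows "p n = (\<Sum>r\<in>{0..n}. card (Gs m r) * card (Ms m (n - r)))"
  using count[OF assms, of n "\<lambda>_. True"] unfolding p_def by simp

lemma prho_eq: assumes "m \<ge> 2"
  shows "p_rho m n k = (\<Sum>r\<in>{0..n}. card {g \<in> Gs m r. orbit_size m g = k} * card (Ms m (n - r)))"
proof -
  have "{f \<in> partitions n. orbit_size m f = k} = {f \<in> partitions n. orbit_size m (gp m f) = k}"
    using orbit_eq[OF assms] by auto
  then show ?thesis unfolding p_rho_def using count[OF assms, of n "\<lambda>g. orbit_size m g = k"] by simp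
qed

lemma Ms_dvd:
  fixes m A B C :: nat
  assumes m: "m \<ge> 2" and "\<forall>n. C dvd p (A * n + B)" and "B < A" and "A dvd m"
  shows "C dvd card (Ms m (A * n + B))"
proof (induction n rule: less_induct)
  case (less n)
  define N where "N = A * n + B"
  have "C dvd (\<Sum>r\<in>{Suc 0..N}. card (Gs m r) * card (Ms m (N - r)))"
  proof (rule dvd_sum)
    fix r assume r: "r \<in> {Suc 0..N}"
    show "C dvd card (Gs m r) * card (Ms m (N - r))"
    proof (cases "m dvd r")
      case False then show ?thesis using Gs_empty by simp
    next
      case True
      then have "A dvd r" using assms(4) dvd_trans by blast
      then obtain t where t: "t \<le> n" "r = A * t" "N - r = A * (n - t) + B"
        using arith_aux[of r A n B] r assms(3) N_def by auto
      have "t \<noteq> 0" using t(2) r by auto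
      then have "n - t < n" using t(1) by simp
      then have "C dvd card (Ms m (A * (n - t) + B))" by (rule less)
      then show ?thesis using t(3) by simp
    qed
  qed
  moreover have "p N = card (Ms m N) + (\<Sum>r\<in>{Suc 0..N}. card (Gs m r) * card (Ms m (N - r)))"
    using p_eq[OF m, of N] card_Gs0[of m] by (simp add: sum.atLeast_Suc_atMost)
  moreover have "C dvd p N" using assms(2) N_def by simp
  ultimately show ?case unfolding N_def[symmetric] by (simp add: dvd_add_left_iff)
qed

theorem theorem1:
  fixes m A B C :: nat
  assumes "m \<ge> 2" and "A \<ge> 1" and "C \<ge> 1"
    and "\<forall>n. C dvd p (A * n + B)"
    and "B < A" and "A dvd m"
  shows "\<forall>k n. k > 0 \<longrightarrow> C dvd p_rho m (A * n + B) k"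
proof (intro allI impI)
  fix k n :: nat
  define N where "N = A * n + B"
  have "C dvd (\<Sum>r\<in>{0..N}. card {g \<in> Gs m r. orbit_size m g = k} * card (Ms m (N - r)))"
  proof (rule dvd_sum)
    fix r assume r: "r \<in> {0..N}"
    show "C dvd card {g \<in> Gs m r. orbit_size m g = k} * card (Ms m (N - r))"
    proof (cases "m dvd r")
      case False then show ?thesis using Gs_empty by simp
    next
      case True
      then have "A dvd r" using assms(6) dvd_trans by blast
      then obtain t where t: "t \<le> n" "r = A * t" "N - r = A * (n - t) + B"
        using arith_aux[of r A n B] r assms(5) N_def by auto
      have "C dvd card (Ms m (A * (n - t) + B))" by (rule Ms_dvd[OF assms(1,4,5,6)])
      then show ?thesis using t(3) by simp
    qed
  qed
  then show "C dvd p_rho m (A * n + B) k" using prho_eq[OF assms(1)] N_def by simp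
qed

end
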